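(* Let $(W,\prec)$ be any $\mathsf{MN}$-frame. Then: (1) $\Box p \to \Box\Box p$ is valid in $(W,\prec)$ if and only if $(W,\prec)$ is transitive; (2) $\neg\Box\bot$ is valid in $(W,\prec)$ if and only if $(W,\prec)$ is an $\mathsf{MNP}$-frame; (3) $\neg(\Box p \land \Box\neg p)$ is valid in $(W,\prec)$ if and only if $(W,\prec)$ is an $\mathsf{MND}$-frame. Here $p$ is a propositional variable.
   Context: The modal language has countably many propositional variables, the constant $\bot$, the connective $\to$ and the operator $\Box$; $\top,\neg,\land,\lor,\Diamond$ are the usual abbreviations. An $\mathsf{MN}$-frame is a pair $(W,\prec)$ where $W$ is a non-empty set and $\prec$ is a binary relation between elements of $W$ and non-empty subsets of $W$ satisfying monotonicity: if $x\prec V$ and $V\subseteq U\subseteq W$ then $x\prec U$. An $\mathsf{MN}$-model is $(W,\prec,\Vdash)$ where $(W,\prec)$ is an $\mathsf{MN}$-frame and $\Vdash$ is a relation between $W$ and formulas satisfying the usual Boolean clauses and: $x\Vdash\Box A$ iff for every $V\subseteq W$ with $x\prec V$ there is $y\in V$ with $y\Vdash A$. A formula is valid in a frame if it is forced at every point under every such satisfaction relation on the frame. The frame is transitive if whenever $x\prec V$ and for each $y\in V$ there is $U_y\subseteq W$ with $y\prec U_y$, then $x\prec\bigcup_{y\in V}U_y$. It is an $\mathsf{MNP}$-frame if for every $x\in W$ there is $V\subseteq W$ with $x\prec V$. It is an $\mathsf{MND}$-frame if for every $x\in W$ and every $V\subseteq W$, $x\prec V$ or $x\prec (W\setminus V)$.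 *)

theory Defs
  imports Main
begin

datatype fm = Var nat | Bot | Imp fm fm | Box fm

definition Neg :: "fm \<Rightarrow> fm" where "Neg A = Imp A Bot"
definition Top :: fm where "Top = Neg Bot"
definition Conj :: "fm \<Rightarrow> fm \<Rightarrow> fm" where "Conj A B = Neg (Imp A (Neg B))"
definition Disj :: "fm \<Rightarrow> fm \<Rightarrow> fm" where "Disj A B = Imp (Neg A) B"
definition Dia :: "fm \<Rightarrow> fm" where "Dia A = Neg (Box (Neg A))"

definition MN_frame :: "'w set \<Rightarrow> ('w \<Rightarrow> 'w set \<Rightarrow> bool) \<Rightarrow> bool" where
  "MN_frame W R \<longleftrightarrow> W \<noteq> {}
     \<and> (\<forall>x V. R x V \<longrightarrow> x \<in> W \<and> V \<subseteq> W \<and> V \<noteq> {})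
     \<and> (\<forall>x V U. R x V \<and> V \<subseteq> U \<and> U \<subseteq> W \<longrightarrow> R x U)"

fun forces :: "'w set \<Rightarrow> ('w \<Rightarrow> 'w set \<Rightarrow> bool) \<Rightarrow> (nat \<Rightarrow> 'w set) \<Rightarrow> 'w \<Rightarrow> fm \<Rightarrow> bool" where
  "forces W R v x (Var n) \<longleftrightarrow> x \<in> v n"
| "forces W R v x Bot \<longleftrightarrow> False"
| "forces W R v x (Imp A B) \<longleftrightarrow> (forces W R v x A \<longrightarrow> forces W R v x B)"
| "forces W R v x (Box A) \<longleftrightarrow> (\<forall>V. V \<subseteq> W \<and> R x V \<longrightarrow> (\<exists>y\<in>V. forces W R v y A))"

definition valid_in_frame :: "'w set \<Rightarrow> ('w \<Rightarrow> 'w set \<Rightarrow> bool) \<Rightarrow> fm \<Rightarrow> bool" where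
  "valid_in_frame W R A \<longleftrightarrow> (\<forall>v. \<forall>x\<in>W. forces W R v x A)"

definition transitive_frame :: "'w set \<Rightarrow> ('w \<Rightarrow> 'w set \<Rightarrow> bool) \<Rightarrow> bool" where
  "transitive_frame W R \<longleftrightarrow>
     (\<forall>x V U. R x V \<and> (\<forall>y\<in>V. U y \<subseteq> W \<and> R y (U y)) \<longrightarrow> R x (\<Union>y\<in>V. U y))"

definition MNP_frame :: "'w set \<Rightarrow> ('w \<Rightarrow> 'w set \<Rightarrow> bool) \<Rightarrow> bool" where
  "MNP_frame W R \<longleftrightarrow> (\<forall>x\<in>W. \<exists>V. V \<subseteq> W \<and> R x V)"

definition MND_frame :: "'w set \<Rightarrow> ('w \<Rightarrow> 'w set \<Rightarrow> bool) \<Rightarrow> bool" where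
  "MND_frame W R \<longleftrightarrow> (\<forall>x\<in>W. \<forall>V. V \<subseteq> W \<longrightarrow> R x V \<or> R x (W - V))"

end

theory Submission
  imports Defs
begin

lemma mn_mono: "MN_frame W R \<Longrightarrow> R x V \<Longrightarrow> V \<subseteq> U \<Longrightarrow> U \<subseteq> W \<Longrightarrow> R x U"
  unfolding MN_frame_def by blast

lemma mn_in: "MN_frame W R \<Longrightarrow> R x V \<Longrightarrow> x \<in> W \<and> V \<subseteq> W"
  unfolding MN_frame_def by blast

lemma part1:
  assumes mn: "MN_frame W R"
  shows "valid_in_frame W R (Imp (Box (Var p)) (Box (Box (Var p)))) \<longleftrightarrow> transitive_frame W R"
proof
  assume val: "valid_in_frame W R (Imp (Box (Var p)) (Box (Box (Var p))))"
  show "transitive_frame W R"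
    unfolding transitive_frame_def
  proof (intro allI impI)
    fix x V U assume h: "R x V \<and> (\<forall>y\<in>V. U y \<subseteq> W \<and> R y (U y))"
    define S where "S = (\<Union>y\<in>V. U y)"
    have SW: "S \<subseteq> W" using h S_def by auto
    have xW: "x \<in> W" and VW: "V \<subseteq> W" using h mn_in[OF mn] by blast+
    define v where "v = (\<lambda>n::nat. W - S)"
    have "\<not> forces W R v x (Box (Box (Var p)))"
    proof -
      have "\<forall>y\<in>V. \<not> forces W R v y (Box (Var p))"
      proof
        fix y assume "y \<in> V"
        hence "U y \<subseteq> W" "R y (U y)" "U y \<subseteq> S" using h S_def by auto
        thus "\<not> forces W R v y (Box (Var p))" by (auto simp: v_def)
      qed
      then show ?thesis using h VW by (simp only: forces.simps) blast
    qed
    moreover have "forces W R v x (Imp (Box (Var p)) (Box (Box (Var p))))"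
      using val xW unfolding valid_in_frame_def by blast
    ultimately have "\<not> forces W R v x (Box (Var p))" by (simp only: forces.simps) blast
    then obtain Z where "Z \<subseteq> W" "R x Z" "\<forall>y\<in>Z. y \<notin> W - S" by (auto simp: v_def)
    hence "Z \<subseteq> S" "R x Z" by auto
    hence "R x S" using mn_mono[OF mn] SW by blast
    thus "R x (\<Union>y\<in>V. U y)" using S_def by simp
  qed
next
  assume tr: "transitive_frame W R"
  show "valid_in_frame W R (Imp (Box (Var p)) (Box (Box (Var p))))"
    unfolding valid_in_frame_def
  proof (intro allI ballI)
    fix v x assume xW: "x \<in> W"
    show "forces W R v x (Imp (Box (Var p)) (Box (Box (Var p))))"
    proof (rule ccontr)
      assume "\<not> ?thesis"
      then have bp: "forces W R v x (Box (Var p))" and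
        nbb: "\<not> forces W R v x (Box (Box (Var p)))" by auto
      from nbb obtain V where V: "V \<subseteq> W" "R x V" "\<forall>y\<in>V. \<not> forces W R v y (Box (Var p))" by auto
      hence "\<forall>y\<in>V. \<exists>Z. Z \<subseteq> W \<and> R y Z \<and> (\<forall>z\<in>Z. z \<notin> v p)" by auto
      then obtain U where U: "\<forall>y\<in>V. U y \<subseteq> W \<and> R y (U y) \<and> (\<forall>z\<in>U y. z \<notin> v p)"
        by (rule bchoice[THEN exE]) blast
      have "R x (\<Union>y\<in>V. U y)" using tr V U unfolding transitive_frame_def by blast
      moreover have "(\<Union>y\<in>V. U y) \<subseteq> W" using U by auto
      ultimately obtain y where "y \<in> (\<Union>y\<in>V. U y)" "y \<in> v p" using bp by (simp only: forces.simps) blast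
      thus False using U by blast
    qed
  qed
qed

lemma part2:
  "valid_in_frame W R (Neg (Box Bot)) \<longleftrightarrow> MNP_frame W R"
  unfolding valid_in_frame_def MNP_frame_def Neg_def by auto

lemma part3:
  assumes mn: "MN_frame W R"
  shows "valid_in_frame W R (Neg (Conj (Box (Var p)) (Box (Neg (Var p))))) \<longleftrightarrow> MND_frame W R"
proof
  assume val: "valid_in_frame W R (Neg (Conj (Box (Var p)) (Box (Neg (Var p)))))"
  show "MND_frame W R" unfolding MND_frame_def
  proof (intro ballI allI impI)
    fix x V assume xW: "x \<in> W" and VW: "V \<subseteq> W"
    define v where "v = (\<lambda>n::nat. V)"
    have "forces W R v x (Neg (Conj (Box (Var p)) (Box (Neg (Var p)))))"
      using val xW unfolding valid_in_frame_def by blast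
    hence "\<not> forces W R v x (Box (Var p)) \<or> \<not> forces W R v x (Box (Neg (Var p)))"
      unfolding Conj_def Neg_def by (simp only: forces.simps) blast
    thus "R x V \<or> R x (W - V)"
    proof
      assume "\<not> forces W R v x (Box (Var p))"
      then obtain Z where "Z \<subseteq> W" "R x Z" "\<forall>z\<in>Z. z \<notin> V" by (auto simp: v_def)
      hence "Z \<subseteq> W - V" "R x Z" by auto
      thus ?thesis using mn_mono[OF mn] by blast
    next
      assume "\<not> forces W R v x (Box (Neg (Var p)))"
      then obtain Z where "Z \<subseteq> W" "R x Z" "\<forall>z\<in>Z. z \<in> V" by (auto simp: v_def Neg_def)
      hence "Z \<subseteq> V" "R x Z" by auto
      thus ?thesis using mn_mono[OF mn] VW by blast
    qed
  qed
next
  assume d: "MND_frame W R"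
  show "valid_in_frame W R (Neg (Conj (Box (Var p)) (Box (Neg (Var p)))))"
    unfolding valid_in_frame_def
  proof (intro allI ballI)
    fix v x assume xW: "x \<in> W"
    have "R x (W \<inter> v p) \<or> R x (W - (W \<inter> v p))" using d xW unfolding MND_frame_def by blast
    hence "\<not> forces W R v x (Box (Var p)) \<or> \<not> forces W R v x (Box (Neg (Var p)))"
    proof
      assume "R x (W \<inter> v p)"
      hence "\<not> (\<exists>y\<in>W \<inter> v p. forces W R v y (Neg (Var p)))" "W \<inter> v p \<subseteq> W" by (auto simp: Neg_def)
      thus ?thesis using \<open>R x (W \<inter> v p)\<close> by (simp only: forces.simps) blast
    next
      assume "R x (W - (W \<inter> v p))"
      hence "\<not> (\<exists>y\<in>W - (W \<inter> v p). forces W R v y (Var p))" "W - (W \<inter> v p) \<subseteq> W" by auto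
      thus ?thesis using \<open>R x (W - (W \<inter> v p))\<close> by (simp only: forces.simps) blast
    qed
    thus "forces W R v x (Neg (Conj (Box (Var p)) (Box (Neg (Var p)))))"
      unfolding Conj_def Neg_def by (simp only: forces.simps) blast
  qed
qed

theorem proposition3p4:
  fixes W :: "'w set" and R :: "'w \<Rightarrow> 'w set \<Rightarrow> bool" and p :: nat
  assumes "MN_frame W R"
  shows "(valid_in_frame W R (Imp (Box (Var p)) (Box (Box (Var p)))) \<longleftrightarrow> transitive_frame W R)
       \<and> (valid_in_frame W R (Neg (Box Bot)) \<longleftrightarrow> MNP_frame W R)
       \<and> (valid_in_frame W R (Neg (Conj (Box (Var p)) (Box (Neg (Var p))))) \<longleftrightarrow> MND_frame W R)"
  using part1[OF assms] part2 part3[OF assms] by blast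

end
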